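(* Let $L$ be a right Leibniz algebra and $I$ an ideal of $L$. (1) If $\mathrm{Ann}_L(I)=\{0\}$ (respectively $\mathrm{ran}_L(I)=\{0\}$), then $I$ is essential. (2) If $L$ is semiprime, then $I\cap\mathrm{Ann}_L(I)=\{0\}$ (respectively $I\cap\mathrm{ran}_L(I)=\{0\}$), and $I$ is essential if and only if $\mathrm{Ann}_L(I)=\{0\}$ (respectively if and only if $\mathrm{ran}_L(I)=\{0\}$).
   Context: A right Leibniz algebra satisfies $[x,[y,z]]=[[x,y],z]-[[x,z],y]$. Ideals: subspaces $I$ with $[I,L]\subseteq I$, $[L,I]\subseteq I$. $L$ is semiprime if $[J,J]\ne\{0\}$ for every nonzero ideal $J$. For $H\subseteq L$: $\mathrm{lan}_L(H)=\{x\in L:[x,y]=0\ \forall y\in H\}$, $\mathrm{ran}_L(H)=\{x\in L:[y,x]=0\ \forall y\in H\}$, $\mathrm{Ann}_L(H)=\mathrm{lan}_L(H)\cap\mathrm{ran}_L(H)$. An ideal $I$ is essential if $I\cap J\ne\{0\}$ for every nonzero ideal $J$ of $L$. *)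

theory Defs
  imports Complex_Main
begin

text \<open>The algebra L is the whole type 'v.\<close>

definition right_leibniz_algebra ::
  "('k::field \<Rightarrow> 'v::ab_group_add \<Rightarrow> 'v) \<Rightarrow> ('v \<Rightarrow> 'v \<Rightarrow> 'v) \<Rightarrow> bool" where
  "right_leibniz_algebra scale br \<longleftrightarrow>
     Vector_Spaces.vector_space scale \<and>
     (\<forall>x y z. br (x + y) z = br x z + br y z) \<and>
     (\<forall>x y z. br x (y + z) = br x y + br x z) \<and>
     (\<forall>a x y. br (scale a x) y = scale a (br x y)) \<and>
     (\<forall>a x y. br x (scale a y) = scale a (br x y)) \<and>
     (\<forall>x y z. br x (br y z) = br (br x y) z - br (br x z) y)"

definition lie_ideal ::
  "('k::field \<Rightarrow> 'v::ab_group_add \<Rightarrow> 'v) \<Rightarrow> ('v \<Rightarrow> 'v \<Rightarrow> 'v) \<Rightarrow> 'v set \<Rightarrow> bool" where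
  "lie_ideal scale br I \<longleftrightarrow>
     module.subspace scale I \<and> (\<forall>x\<in>I. \<forall>y. br x y \<in> I \<and> br y x \<in> I)"

definition brset ::
  "('k::field \<Rightarrow> 'v::ab_group_add \<Rightarrow> 'v) \<Rightarrow> ('v \<Rightarrow> 'v \<Rightarrow> 'v) \<Rightarrow> 'v set \<Rightarrow> 'v set \<Rightarrow> 'v set" where
  "brset scale br J K = module.span scale {br x y | x y. x \<in> J \<and> y \<in> K}"

definition semiprime ::
  "('k::field \<Rightarrow> 'v::ab_group_add \<Rightarrow> 'v) \<Rightarrow> ('v \<Rightarrow> 'v \<Rightarrow> 'v) \<Rightarrow> bool" where
  "semiprime scale br \<longleftrightarrow>
     (\<forall>J. lie_ideal scale br J \<and> J \<noteq> {0} \<longrightarrow> brset scale br J J \<noteq> {0})"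

definition lanL :: "('v \<Rightarrow> 'v \<Rightarrow> 'v::zero) \<Rightarrow> 'v set \<Rightarrow> 'v set" where
  "lanL br H = {x. \<forall>y\<in>H. br x y = 0}"

definition ranL :: "('v \<Rightarrow> 'v \<Rightarrow> 'v::zero) \<Rightarrow> 'v set \<Rightarrow> 'v set" where
  "ranL br H = {x. \<forall>y\<in>H. br y x = 0}"

definition AnnL :: "('v \<Rightarrow> 'v \<Rightarrow> 'v::zero) \<Rightarrow> 'v set \<Rightarrow> 'v set" where
  "AnnL br H = lanL br H \<inter> ranL br H"

definition essential_ideal ::
  "('k::field \<Rightarrow> 'v::ab_group_add \<Rightarrow> 'v) \<Rightarrow> ('v \<Rightarrow> 'v \<Rightarrow> 'v) \<Rightarrow> 'v set \<Rightarrow> bool" where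
  "essential_ideal scale br I \<longleftrightarrow>
     lie_ideal scale br I \<and>
     (\<forall>J. lie_ideal scale br J \<and> J \<noteq> {0} \<longrightarrow> I \<inter> J \<noteq> {0})"

end

theory Submission
  imports Defs
begin

lemma ran_ideal:
  fixes scale :: "'k::field \<Rightarrow> 'v::ab_group_add \<Rightarrow> 'v"
    and br :: "'v \<Rightarrow> 'v \<Rightarrow> 'v"
  assumes L: "right_leibniz_algebra scale br"
    and I: "lie_ideal scale br I"
  shows "lie_ideal scale br (ranL br I)"
    and "0 \<in> ranL br I"
    and "AnnL br I \<subseteq> ranL br I"
    and "\<And>x y. br 0 y = 0" and "\<And>x. br x 0 = 0"
proof -
  have vs: "Vector_Spaces.vector_space scale" using L unfolding right_leibniz_algebra_def by blast
  then have m: "module scale" by (simp add: vector_space_def module_def)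
  have addl: "\<And>x y z. br (x + y) z = br x z + br y z"
   and addr: "\<And>x y z. br x (y + z) = br x y + br x z"
   and scr: "\<And>a x y. br x (scale a y) = scale a (br x y)"
   and leib: "\<And>x y z. br x (br y z) = br (br x y) z - br (br x z) y"
    using L unfolding right_leibniz_algebra_def by blast+
  have z1: "\<And>y. br 0 y = 0" using addl[of 0 0] by simp
  have z2: "\<And>x. br x 0 = 0" using addr[of _ 0 0] by simp
  show "\<And>x y. br 0 y = 0" "\<And>x. br x 0 = 0" using z1 z2 by auto
  show "0 \<in> ranL br I" unfolding ranL_def using z2 by simp
  show "AnnL br I \<subseteq> ranL br I" unfolding AnnL_def by blast
  have Icl: "\<And>x y. x \<in> I \<Longrightarrow> br x y \<in> I \<and> br y x \<in> I" using I unfolding lie_ideal_def by blast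
  have sub: "module.subspace scale (ranL br I)"
    unfolding module.subspace_def[OF m] ranL_def
    using z2 addr scr module.scale_zero_right[OF m] by auto
  have cl: "\<forall>x\<in>ranL br I. \<forall>y. br x y \<in> ranL br I \<and> br y x \<in> ranL br I"
  proof (intro ballI allI conjI)
    fix x y assume x: "x \<in> ranL br I"
    show "br x y \<in> ranL br I" unfolding ranL_def
    proof (intro CollectI ballI)
      fix i assume i: "i \<in> I"
      have "br i (br x y) = br (br i x) y - br (br i y) x" by (rule leib)
      also have "... = 0" using x i Icl[OF i, of y] z1 unfolding ranL_def by simp
      finally show "br i (br x y) = 0" .
    qed
    show "br y x \<in> ranL br I" unfolding ranL_def
    proof (intro CollectI ballI)
      fix i assume i: "i \<in> I"
      have "br i (br y x) = br (br i y) x - br (br i x) y" by (rule leib)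
      also have "... = 0" using x i Icl[OF i, of y] z1 unfolding ranL_def by simp
      finally show "br i (br y x) = 0" .
    qed
  qed
  show "lie_ideal scale br (ranL br I)" unfolding lie_ideal_def using sub cl by blast
qed

theorem proposition2p8:
  fixes scale :: "'k::field \<Rightarrow> 'v::ab_group_add \<Rightarrow> 'v"
    and br :: "'v \<Rightarrow> 'v \<Rightarrow> 'v"
    and I :: "'v set"
  assumes L: "right_leibniz_algebra scale br"
    and I: "lie_ideal scale br I"
  shows "(AnnL br I = {0} \<longrightarrow> essential_ideal scale br I)
       \<and> (ranL br I = {0} \<longrightarrow> essential_ideal scale br I)
       \<and> (semiprime scale br \<longrightarrow>
            I \<inter> AnnL br I = {0} \<and> I \<inter> ranL br I = {0}
          \<and> (essential_ideal scale br I \<longleftrightarrow> AnnL br I = {0})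
          \<and> (essential_ideal scale br I \<longleftrightarrow> ranL br I = {0}))"
proof -
  have vs: "Vector_Spaces.vector_space scale" using L unfolding right_leibniz_algebra_def by blast
  then have m: "module scale" by (simp add: vector_space_def module_def)
  note R = ran_ideal[OF L I]
  have zI: "\<And>J. lie_ideal scale br J \<Longrightarrow> 0 \<in> J"
    using module.subspace_0[OF m] unfolding lie_ideal_def by blast
  have A0: "0 \<in> AnnL br I" unfolding AnnL_def lanL_def ranL_def using R(4,5) by simp
  have part1: "AnnL br I = {0} \<Longrightarrow> essential_ideal scale br I"
  proof -
    assume A: "AnnL br I = {0}"
    show ?thesis unfolding essential_ideal_def
    proof (intro conjI I allI impI)
      fix J assume J: "lie_ideal scale br J \<and> J \<noteq> {0}"
      show "I \<inter> J \<noteq> {0}"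
      proof
        assume IJ: "I \<inter> J = {0}"
        have "J \<subseteq> AnnL br I"
        proof
          fix x assume x: "x \<in> J"
          have "\<And>y. y \<in> I \<Longrightarrow> br x y = 0 \<and> br y x = 0"
          proof -
            fix y assume y: "y \<in> I"
            have "br x y \<in> I \<inter> J" "br y x \<in> I \<inter> J"
              using I J x y unfolding lie_ideal_def by blast+
            then show "br x y = 0 \<and> br y x = 0" using IJ by blast
          qed
          then show "x \<in> AnnL br I" unfolding AnnL_def lanL_def ranL_def by blast
        qed
        then show False using A J zI by blast
      qed
    qed
  qed
  have part2: "ranL br I = {0} \<Longrightarrow> essential_ideal scale br I"
    using part1 R(3) A0 by blast
  have part3: "semiprime scale br \<Longrightarrow> I \<inter> ranL br I = {0}"
  proof -
    assume sp: "semiprime scale br"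
    let ?K = "I \<inter> ranL br I"
    have Kid: "lie_ideal scale br ?K"
      using I R(1) module.subspace_inter[OF m] unfolding lie_ideal_def by blast
    have "{br x y | x y. x \<in> ?K \<and> y \<in> ?K} = {0}"
    proof
      show "{br x y | x y. x \<in> ?K \<and> y \<in> ?K} \<subseteq> {0}" unfolding ranL_def by auto
      have "br 0 0 = 0" using R(4) by simp
      then show "{0} \<subseteq> {br x y | x y. x \<in> ?K \<and> y \<in> ?K}" using zI[OF Kid] by (metis (mono_tags, lifting) empty_subsetI insert_subset mem_Collect_eq)
    qed
    then have "brset scale br ?K ?K = {0}"
      unfolding brset_def using module.span_eq_iff[OF m, of "{0}"] module.subspace_def[OF m] module.scale_zero_right[OF m] by simp
    then show ?thesis using sp Kid unfolding semiprime_def by blast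
  qed
  show ?thesis
  proof (intro conjI impI)
    show "AnnL br I = {0} \<Longrightarrow> essential_ideal scale br I" by (rule part1)
    show "ranL br I = {0} \<Longrightarrow> essential_ideal scale br I" by (rule part2)
    assume sp: "semiprime scale br"
    have ri: "I \<inter> ranL br I = {0}" by (rule part3[OF sp])
    show "I \<inter> ranL br I = {0}" by (rule ri)
    show "I \<inter> AnnL br I = {0}" using ri R(3) A0 zI[OF I] by blast
    have ess: "essential_ideal scale br I \<Longrightarrow> ranL br I = {0}"
      using ri R(1) unfolding essential_ideal_def by blast
    show "essential_ideal scale br I = (AnnL br I = {0})"
      using ess part1 R(3) A0 by blast
    show "essential_ideal scale br I = (ranL br I = {0})"
      using ess part2 by blast
  qed
qed

end
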